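(* Let $(X_n)$ be i.i.d. in $S$ satisfying $\mathbb P\bigl(\bigcup_{n\ge1}[X_n\cdots X_1\in S^\circ]\bigr)>0$, and assume there exist $0<\alpha\le2$, a slowly varying function $L$ (unbounded if $\alpha=2$) and constants $c_+,c_-\ge0$ with $c_++c_->0$ such that (i) $\lim_{u\to+\infty}\frac{u^\alpha}{L(u)}\mathbb P[N_1>e^u]=c_+$ and $\lim_{u\to+\infty}\frac{u^\alpha}{L(u)}\mathbb P[N_1\le e^{-u}]=c_-$; (ii) $\limsup_{u\to+\infty}\frac{u^\alpha}{L(u)}\mathbb P[V_1\le e^{-u}]<+\infty$. Let $F(u)=(\mu\otimes\nu)\{(g,x)\in S\times\overline B:\xi(g,x)\le u\}$, $u\in\mathbb R$. Then $$\lim_{u\to+\infty}\frac{u^\alpha}{L(u)}\bigl(1-F(u)\bigr)=c_+\qquad\text{and}\qquad\lim_{u\to+\infty}\frac{u^\alpha}{L(u)}F(-u)=c_-.$$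
   Context: $S$ is the semigroup of real $q\times q$ matrices with nonnegative entries such that every row and every column contains a strictly positive entry; $S^\circ$ the subset with all entries strictly positive. $(e_i)$ is the canonical basis of $\mathbb R^q$, $\|x\|=\sum_i|x_i|$, $\overline B=\{x\in\mathbb R^q:x_i\ge0,\ \|x\|=1\}$, $g\cdot x=gx/\|gx\|$, $\xi(g,x)=\ln\|gx\|$. $\mu$ is the law of $Y_1=X_1^*$ and $\nu$ is the unique $\mu$-invariant probability measure on $\overline B$ (i.e. $\int\int f(g\cdot x)d\mu(g)d\nu(x)=\int fd\nu$ for all bounded continuous $f$). $N_1=\sum_{i,j}\langle e_i,X_1e_j\rangle$ and $V_1=\min_i\sum_j\langle e_i,X_1e_j\rangle$. *)

theory Defs
  imports "HOL-Probability.Probability"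
begin

definition S_set :: "(real^'q^'q) set" where
  "S_set = {g. (\<forall>i j. g $ i $ j \<ge> 0) \<and> (\<forall>i. \<exists>j. g $ i $ j > 0) \<and> (\<forall>j. \<exists>i. g $ i $ j > 0)}"

definition S_pos :: "(real^'q^'q) set" where
  "S_pos = {g. \<forall>i j. g $ i $ j > 0}"

definition l1norm :: "real^'q \<Rightarrow> real" where
  "l1norm x = (\<Sum>i\<in>UNIV. \<bar>x $ i\<bar>)"

definition Bbar :: "(real^'q) set" where
  "Bbar = {x. (\<forall>i. x $ i \<ge> 0) \<and> l1norm x = 1}"

definition proj_act :: "real^'q^'q \<Rightarrow> real^'q \<Rightarrow> real^'q" where
  "proj_act g x = (1 / l1norm (g *v x)) *\<^sub>R (g *v x)"

definition xi :: "real^'q^'q \<Rightarrow> real^'q \<Rightarrow> real" where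
  "xi g x = ln (l1norm (g *v x))"

definition Nsum :: "real^'q^'q \<Rightarrow> real" where
  "Nsum g = (\<Sum>i\<in>UNIV. \<Sum>j\<in>UNIV. g $ i $ j)"

definition Vmin :: "real^'q^'q \<Rightarrow> real" where
  "Vmin g = Min (range (\<lambda>i. \<Sum>j\<in>UNIV. g $ i $ j))"

text \<open>Left product X_{n-1} ... X_0 (random matrices indexed from 0).\<close>
fun lprod :: "(nat \<Rightarrow> real^'q^'q) \<Rightarrow> nat \<Rightarrow> real^'q^'q" where
  "lprod Y 0 = mat 1"
| "lprod Y (Suc n) = Y n ** lprod Y n"

definition slowly_varying :: "(real \<Rightarrow> real) \<Rightarrow> bool" where
  "slowly_varying L \<longleftrightarrow> L \<in> borel_measurable borel \<and> (\<forall>\<^sub>F u in at_top. L u > 0) \<and>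
     (\<forall>t>0. ((\<lambda>u. L (t * u) / L u) \<longlongrightarrow> 1) at_top)"

definition mu_invariant :: "(real^'q^'q) measure \<Rightarrow> (real^'q) measure \<Rightarrow> bool" where
  "mu_invariant \<mu> \<nu> \<longleftrightarrow> (\<forall>f::real^'q \<Rightarrow> real. continuous_on UNIV f \<longrightarrow> bounded (range f) \<longrightarrow>
     (\<integral>x. (\<integral>g. f (proj_act g x) \<partial>\<mu>) \<partial>\<nu>) = (\<integral>x. f x \<partial>\<nu>))"

end

theory Submission
  imports Defs
begin


lemma cont_mv: "continuous_on UNIV (\<lambda>p::(real^'q^'q)\<times>(real^'q). fst p *v snd p)"
  unfolding matrix_vector_mult_def by (intro continuous_intros)

lemma meas_mv0: "(\<lambda>p::(real^'q^'q)\<times>(real^'q). fst p *v snd p) \<in> borel_measurable (borel \<Otimes>\<^sub>M borel)"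
  using borel_measurable_continuous_onI[OF cont_mv] by (simp add: borel_prod)

lemma meas_mv[measurable (raw)]:
  fixes f :: "'a \<Rightarrow> real^'q^'q" and h :: "'a \<Rightarrow> real^'q"
  assumes [measurable]: "f \<in> borel_measurable M" "h \<in> borel_measurable M"
  shows "(\<lambda>x. f x *v h x) \<in> borel_measurable M"
  using measurable_compose[OF _ meas_mv0, of "\<lambda>x. (f x, h x)" M] by simp

lemma cont_l1: "continuous_on UNIV (l1norm :: real^'q \<Rightarrow> real)"
  unfolding l1norm_def by (intro continuous_intros)

lemma meas_l1[measurable (raw)]:
  fixes h :: "'a \<Rightarrow> real^'q"
  assumes [measurable]: "h \<in> borel_measurable M"
  shows "(\<lambda>x. l1norm (h x)) \<in> borel_measurable M"
  using measurable_compose[OF assms borel_measurable_continuous_onI[OF cont_l1]] by simp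

lemma meas_nth[measurable (raw)]:
  fixes h :: "'a \<Rightarrow> real^'q"
  assumes [measurable]: "h \<in> borel_measurable M"
  shows "(\<lambda>x. h x $ i) \<in> borel_measurable M"
  using measurable_compose[OF assms borel_measurable_continuous_onI[OF continuous_on_component[OF continuous_on_id]]] by simp

lemma meas_nth2[measurable (raw)]:
  fixes h :: "'a \<Rightarrow> real^'q^'q"
  assumes [measurable]: "h \<in> borel_measurable M"
  shows "(\<lambda>x. h x $ i) \<in> borel_measurable M"
  using measurable_compose[OF assms borel_measurable_continuous_onI[OF continuous_on_component[OF continuous_on_id]]] by simp

lemma meas_proj[measurable (raw)]:
  fixes f :: "'a \<Rightarrow> real^'q^'q" and h :: "'a \<Rightarrow> real^'q"
  assumes [measurable]: "f \<in> borel_measurable M" "h \<in> borel_measurable M"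
  shows "(\<lambda>x. proj_act (f x) (h x)) \<in> borel_measurable M"
  unfolding proj_act_def by measurable

lemma meas_xi[measurable (raw)]:
  fixes f :: "'a \<Rightarrow> real^'q^'q" and h :: "'a \<Rightarrow> real^'q"
  assumes [measurable]: "f \<in> borel_measurable M" "h \<in> borel_measurable M"
  shows "(\<lambda>x. xi (f x) (h x)) \<in> borel_measurable M"
  unfolding xi_def by measurable

lemma S_meas[measurable]: "S_set \<in> sets borel"
proof -
  have "S_set = {g\<in>space borel. (\<forall>i j. g $ i $ j \<ge> 0) \<and> (\<forall>i. \<exists>j. g $ i $ j > 0) \<and> (\<forall>j. \<exists>i. g $ i $ j > 0)}"
    unfolding S_set_def by simp
  also have "\<dots> \<in> sets borel" by measurable
  finally show ?thesis .
qed

lemma Spos_meas[measurable]: "S_pos \<in> sets borel"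
proof -
  have "S_pos = {g\<in>space borel. (\<forall>i j. g $ i $ j > 0)}"
    unfolding S_pos_def by simp
  also have "\<dots> \<in> sets borel" by measurable
  finally show ?thesis .
qed

lemma Bbar_meas[measurable]: "Bbar \<in> sets borel"
proof -
  have "Bbar = {x\<in>space borel. (\<forall>i. x $ i \<ge> 0) \<and> l1norm x = 1}"
    unfolding Bbar_def by simp
  also have "\<dots> \<in> sets borel" by measurable
  finally show ?thesis .
qed

lemma meas_Nsum[measurable]: "Nsum \<in> borel_measurable borel"
  unfolding Nsum_def by measurable

lemma meas_Vmin[measurable]: "(Vmin :: real^'q^'q \<Rightarrow> real) \<in> borel_measurable borel"
proof -
  have "Vmin = (\<lambda>g::real^'q^'q. Min ((\<lambda>i. \<Sum>j\<in>UNIV. g $ i $ j) ` UNIV))"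
    by (simp add: Vmin_def fun_eq_iff)
  moreover have "(\<lambda>g::real^'q^'q. Min ((\<lambda>i. \<Sum>j\<in>UNIV. g $ i $ j) ` UNIV)) \<in> borel_measurable borel"
    by (rule borel_measurable_Min) auto
  ultimately show ?thesis by simp
qed

lemma fk_cont: "continuous_on UNIV (\<lambda>y::'a::metric_space. max 0 (1 - real (Suc k) * infdist y C))"
  by (intro continuous_intros)

lemma fk_bounds: "0 \<le> max 0 (1 - real (Suc k) * infdist y C)" "max 0 (1 - real (Suc k) * infdist y C) \<le> 1"
  using infdist_nonneg[of y C] by auto

lemma fk_lim:
  assumes "closed C" "C \<noteq> {}"
  shows "(\<lambda>k. max 0 (1 - real (Suc k) * infdist y C)) \<longlonglongrightarrow> indicator C y"
proof (cases "y \<in> C")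
  case True then show ?thesis by simp
next
  case False
  then have d: "infdist y C > 0" using infdist_pos_not_in_closed assms by blast
  obtain N :: nat where N: "1 / infdist y C < N" using reals_Archimedean2 by blast
  have "eventually (\<lambda>k. max 0 (1 - real (Suc k) * infdist y C) = 0) sequentially"
    unfolding eventually_sequentially
  proof (intro exI allI impI)
    fix k assume "N \<le> k"
    then have "1 / infdist y C < real (Suc k)" using N by linarith
    then have "1 < real (Suc k) * infdist y C" using d by (simp add: field_simps)
    then show "max 0 (1 - real (Suc k) * infdist y C) = 0" by simp
  qed
  then show ?thesis using False by (simp add: tendsto_eventually)
qed

lemma inv_closed:
  fixes \<mu> :: "(real^'q^'q) measure" and \<nu> :: "(real^'q) measure"
  assumes Pm: "prob_space \<mu>" and sm: "sets \<mu> = sets borel"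
    and Pn: "prob_space \<nu>" and sn: "sets \<nu> = sets borel"
    and inv: "mu_invariant \<mu> \<nu>" and C: "closed C"
  shows "measure \<nu> C = (\<integral>x. measure \<mu> {g\<in>space \<mu>. proj_act g x \<in> C} \<partial>\<nu>)"
    "(\<lambda>x. measure \<mu> {g\<in>space \<mu>. proj_act g x \<in> C}) \<in> borel_measurable \<nu>"
proof -
  interpret m: prob_space \<mu> by fact
  interpret n: prob_space \<nu> by fact
  have spm: "space \<mu> = UNIV" using sets_eq_imp_space_eq[OF sm] by simp
  have spn: "space \<nu> = UNIV" using sets_eq_imp_space_eq[OF sn] by simp
  have Cb[measurable]: "C \<in> sets borel" using C by (simp add: borel_closed)
  define h where "h x = measure \<mu> {g\<in>space \<mu>. proj_act g x \<in> C}" for x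
  have "measure \<nu> C = (\<integral>x. h x \<partial>\<nu>) \<and> h \<in> borel_measurable \<nu>"
  proof (cases "C = {}")
    case True
    then have "h = (\<lambda>_. 0)" by (simp add: h_def fun_eq_iff)
    then show ?thesis using True by simp
  next
    case Cne: False
    define f where "f k y = max 0 (1 - real (Suc k) * infdist y C)" for k and y :: "real^'q"
    have fm[measurable]: "f k \<in> borel_measurable borel" for k
      unfolding f_def by (rule borel_measurable_continuous_onI[OF fk_cont])
    have fb: "0 \<le> f k y" "f k y \<le> 1" for k y unfolding f_def using fk_bounds by auto
    have fl: "(\<lambda>k. f k y) \<longlonglongrightarrow> indicator C y" for y unfolding f_def using fk_lim[OF C Cne] .
    have inv_k: "(\<integral>x. (\<integral>g. f k (proj_act g x) \<partial>\<mu>) \<partial>\<nu>) = (\<integral>x. f k x \<partial>\<nu>)" for k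
    proof -
      have "continuous_on UNIV (f k)" unfolding f_def by (rule fk_cont)
      moreover have "bounded (range (f k))" unfolding bounded_iff using fb by (intro exI[of _ 1]) auto
      ultimately show ?thesis using inv unfolding mu_invariant_def by blast
    qed
    define G where "G k x = (\<integral>g. f k (proj_act g x) \<partial>\<mu>)" for k x
    have Gm: "G k \<in> borel_measurable \<nu>" for k
    proof -
      have "(\<lambda>p::(real^'q)\<times>(real^'q^'q). f k (proj_act (snd p) (fst p))) \<in> borel_measurable (borel \<Otimes>\<^sub>M borel)"
        by measurable
      then have "(\<lambda>p::(real^'q)\<times>(real^'q^'q). f k (proj_act (snd p) (fst p))) \<in> borel_measurable (\<nu> \<Otimes>\<^sub>M \<mu>)"
        by (subst measurable_cong_sets[OF sets_pair_measure_cong[OF sn sm] refl])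
      then have "case_prod (\<lambda>x g. f k (proj_act g x)) \<in> borel_measurable (\<nu> \<Otimes>\<^sub>M \<mu>)"
        by (simp add: case_prod_beta')
      then show ?thesis unfolding G_def by (rule m.borel_measurable_lebesgue_integral)
    qed
    have pm: "(\<lambda>g. proj_act g x) \<in> borel_measurable \<mu>" for x
    proof -
      have "(\<lambda>g. proj_act g x) \<in> borel_measurable borel" by measurable
      then show ?thesis by (subst measurable_cong_sets[OF sm refl])
    qed
    have Gl: "(\<lambda>k. G k x) \<longlonglongrightarrow> h x" for x
    proof -
      have "(\<lambda>k. \<integral>g. f k (proj_act g x) \<partial>\<mu>) \<longlonglongrightarrow> (\<integral>g. indicator C (proj_act g x) \<partial>\<mu>)"
      proof (rule integral_dominated_convergence[where w="\<lambda>_. 1"])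
        show "(\<lambda>g. indicator C (proj_act g x) :: real) \<in> borel_measurable \<mu>"
          using pm by measurable
        show "(\<lambda>g. f k (proj_act g x)) \<in> borel_measurable \<mu>" for k
          using pm by measurable
        show "integrable \<mu> (\<lambda>_. 1::real)" by simp
        show "AE g in \<mu>. (\<lambda>k. f k (proj_act g x)) \<longlonglongrightarrow> indicator C (proj_act g x)"
          using fl by simp
        show "AE g in \<mu>. norm (f k (proj_act g x)) \<le> 1" for k using fb by simp
      qed
      moreover have "(\<integral>g. indicator C (proj_act g x) \<partial>\<mu>) = h x"
      proof -
        have "(\<lambda>g. indicator C (proj_act g x) :: real) = indicator {g. proj_act g x \<in> C}"
          by (auto simp: indicator_def)
        then show ?thesis unfolding h_def using spm by simp
      qed
      ultimately show ?thesis unfolding G_def by simp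
    qed
    have hm: "h \<in> borel_measurable \<nu>"
      by (rule borel_measurable_LIMSEQ_real[OF Gl Gm])
    have hb: "norm (G k x) \<le> 1" for k x
    proof -
      have "norm (G k x) \<le> (\<integral>g. norm (f k (proj_act g x)) \<partial>\<mu>)" unfolding G_def
        by (rule integral_norm_bound)
      also have "\<dots> \<le> (\<integral>g. 1 \<partial>\<mu>)"
        using fb pm[of x] by (intro integral_mono m.integrable_const_bound[where B=1]) auto
      also have "\<dots> = 1" by (simp add: m.prob_space)
      finally show ?thesis .
    qed
    have L1: "(\<lambda>k. \<integral>x. G k x \<partial>\<nu>) \<longlonglongrightarrow> (\<integral>x. h x \<partial>\<nu>)"
      by (rule integral_dominated_convergence[where w="\<lambda>_. 1"]) (use hm Gm Gl hb in auto)
    have L2: "(\<lambda>k. \<integral>x. f k x \<partial>\<nu>) \<longlonglongrightarrow> (\<integral>x. indicator C x \<partial>\<nu>)"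
    proof (rule integral_dominated_convergence[where w="\<lambda>_. 1"])
      show "indicator C \<in> borel_measurable \<nu>" by (subst measurable_cong_sets[OF sn refl]) simp
      show "f k \<in> borel_measurable \<nu>" for k by (subst measurable_cong_sets[OF sn refl]) simp
    qed (use fl fb in auto)
    have "(\<lambda>k. \<integral>x. G k x \<partial>\<nu>) = (\<lambda>k. \<integral>x. f k x \<partial>\<nu>)" using inv_k unfolding G_def by simp
    with L1 L2 have "(\<integral>x. h x \<partial>\<nu>) = (\<integral>x. indicator C x \<partial>\<nu>)" using LIMSEQ_unique by metis
    then show ?thesis using hm spn by simp
  qed
  then show "measure \<nu> C = (\<integral>x. measure \<mu> {g\<in>space \<mu>. proj_act g x \<in> C} \<partial>\<nu>)"
    "(\<lambda>x. measure \<mu> {g\<in>space \<mu>. proj_act g x \<in> C}) \<in> borel_measurable \<nu>"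
    unfolding h_def by auto
qed

definition supp :: "real^'q \<Rightarrow> 'q set" where "supp x = {j. x $ j \<noteq> 0}"
definition img :: "real^'q^'q \<Rightarrow> 'q set \<Rightarrow> 'q set" where "img g J = {i. \<exists>j\<in>J. g $ i $ j \<noteq> 0}"
definition cs :: "real^'q^'q \<Rightarrow> 'q \<Rightarrow> real" where "cs g j = (\<Sum>i\<in>UNIV. g $ i $ j)"

lemma mv_nth: "(g *v x) $ i = (\<Sum>j\<in>UNIV. g $ i $ j * x $ j)"
  by (simp add: matrix_vector_mult_def)

lemma mm_nth: "(A ** B) $ i $ j = (\<Sum>k\<in>UNIV. A $ i $ k * B $ k $ j)"
  by (simp add: matrix_matrix_mult_def)

lemma mv_nonneg: "(\<forall>i j. (g::real^'q^'q) $ i $ j \<ge> 0) \<Longrightarrow> (\<forall>j. x $ j \<ge> 0) \<Longrightarrow> (g *v x) $ i \<ge> 0"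
  unfolding mv_nth by (auto intro!: sum_nonneg)

lemma supp_mv:
  assumes g: "\<forall>i j. g $ i $ j \<ge> 0" and x: "\<forall>j. x $ j \<ge> 0"
  shows "supp (g *v x) = img g (supp x)"
proof -
  have "(g *v x) $ i \<noteq> 0 \<longleftrightarrow> (\<exists>j. g $ i $ j \<noteq> 0 \<and> x $ j \<noteq> 0)" for i
  proof -
    have "(\<Sum>j\<in>UNIV. g $ i $ j * x $ j) = 0 \<longleftrightarrow> (\<forall>j\<in>UNIV. g $ i $ j * x $ j = 0)"
      using g x by (intro sum_nonneg_eq_0_iff) auto
    then show ?thesis unfolding mv_nth by auto
  qed
  then show ?thesis unfolding supp_def img_def by auto
qed

lemma mm_nonneg: "(\<forall>i j. (A::real^'q^'q) $ i $ j \<ge> 0) \<Longrightarrow> (\<forall>i j. B $ i $ j \<ge> 0) \<Longrightarrow> (A ** B) $ i $ j \<ge> 0"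
  unfolding mm_nth by (auto intro!: sum_nonneg)

lemma img_mult:
  assumes A: "\<forall>i j. A $ i $ j \<ge> 0" and B: "\<forall>i j. B $ i $ j \<ge> 0"
  shows "img (A ** B) J = img A (img B J)"
proof -
  have "(A ** B) $ i $ j \<noteq> 0 \<longleftrightarrow> (\<exists>k. A $ i $ k \<noteq> 0 \<and> B $ k $ j \<noteq> 0)" for i j
  proof -
    have "(\<Sum>k\<in>UNIV. A $ i $ k * B $ k $ j) = 0 \<longleftrightarrow> (\<forall>k\<in>UNIV. A $ i $ k * B $ k $ j = 0)"
      using A B by (intro sum_nonneg_eq_0_iff) auto
    then show ?thesis unfolding mm_nth by auto
  qed
  then show ?thesis unfolding img_def by auto
qed

lemma img_mono: "J \<subseteq> K \<Longrightarrow> img g J \<subseteq> img g K"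
  unfolding img_def by auto

lemma img_one: "img (mat 1) J = J"
  unfolding img_def by (auto simp: mat_def)

lemma img_S_UNIV: "g \<in> S_set \<Longrightarrow> img g UNIV = UNIV"
  unfolding img_def S_set_def by (auto, metis less_irrefl)

lemma img_pos: "g \<in> S_pos \<Longrightarrow> J \<noteq> {} \<Longrightarrow> img g J = UNIV"
  unfolding img_def S_pos_def by (auto, metis less_irrefl)

lemma transpose_nth: "transpose g $ i $ j = g $ j $ i"
  by (simp add: transpose_def)

lemma S_transpose: "g \<in> S_set \<Longrightarrow> transpose g \<in> S_set"
  unfolding S_set_def by (auto simp: transpose_nth)

lemma Spos_transpose: "transpose g \<in> S_pos \<longleftrightarrow> g \<in> S_pos"
  unfolding S_pos_def by (auto simp: transpose_nth)

lemma S_nonneg: "g \<in> S_set \<Longrightarrow> \<forall>i j. g $ i $ j \<ge> 0"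
  unfolding S_set_def by auto

lemma l1_scale: "l1norm (c *\<^sub>R y) = \<bar>c\<bar> * l1norm y"
  unfolding l1norm_def by (simp add: abs_mult sum_distrib_left)

lemma supp_scale: "c \<noteq> 0 \<Longrightarrow> supp (c *\<^sub>R y) = supp y"
  unfolding supp_def by auto

lemma l1_formula:
  assumes g: "\<forall>i j. g $ i $ j \<ge> 0" and x: "\<forall>j. x $ j \<ge> 0"
  shows "l1norm (g *v x) = (\<Sum>j\<in>UNIV. cs g j * x $ j)"
proof -
  have "l1norm (g *v x) = (\<Sum>i\<in>UNIV. (\<Sum>j\<in>UNIV. g $ i $ j * x $ j))"
    unfolding l1norm_def using mv_nonneg[OF g x] by (simp add: mv_nth)
  also have "\<dots> = (\<Sum>j\<in>UNIV. (\<Sum>i\<in>UNIV. g $ i $ j * x $ j))" by (rule sum.swap)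
  also have "\<dots> = (\<Sum>j\<in>UNIV. cs g j * x $ j)" unfolding cs_def by (simp add: sum_distrib_right)
  finally show ?thesis .
qed

lemma Nsum_cs: "Nsum g = (\<Sum>j\<in>UNIV. cs g j)"
  unfolding Nsum_def cs_def by (rule sum.swap)

lemma Nsum_transpose: "Nsum (transpose g) = Nsum g"
  unfolding Nsum_def transpose_nth by (rule sum.swap)

lemma Vmin_transpose: "Vmin (transpose g) = Min (range (cs g))"
  unfolding Vmin_def cs_def transpose_nth by simp

lemma cs_nonneg: "g \<in> S_set \<Longrightarrow> cs g j \<ge> 0"
  unfolding cs_def using S_nonneg by (auto intro!: sum_nonneg)

lemma cs_pos: "g \<in> S_set \<Longrightarrow> cs g j > 0"
proof -
  assume g: "g \<in> S_set"
  then obtain i where "g $ i $ j > 0" unfolding S_set_def by blast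
  moreover have "g $ i $ j \<le> cs g j" unfolding cs_def
    using S_nonneg[OF g] by (intro member_le_sum) auto
  ultimately show ?thesis by simp
qed

lemma Bbar_sum: "x \<in> Bbar \<Longrightarrow> (\<Sum>j\<in>UNIV. x $ j) = 1"
  unfolding Bbar_def l1norm_def by auto

lemma Vmin_pos: "g \<in> S_set \<Longrightarrow> Vmin (transpose g) > 0"
  unfolding Vmin_transpose using cs_pos by (subst Min_gr_iff) auto

lemma l1_upper: "g \<in> S_set \<Longrightarrow> x \<in> Bbar \<Longrightarrow> l1norm (g *v x) \<le> Nsum g"
proof -
  assume g: "g \<in> S_set" and x: "x \<in> Bbar"
  have x0: "\<forall>j. x $ j \<ge> 0" and x1: "\<And>j. x $ j \<le> 1"
    using x unfolding Bbar_def l1norm_def apply auto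
    subgoal for j using member_le_sum[of j UNIV "\<lambda>j. x $ j"] by auto done
  have "l1norm (g *v x) = (\<Sum>j\<in>UNIV. cs g j * x $ j)" using l1_formula S_nonneg[OF g] x0 by blast
  also have "\<dots> \<le> (\<Sum>j\<in>UNIV. cs g j)"
    using cs_nonneg[OF g] x1 by (intro sum_mono) (simp add: mult_left_le)
  finally show ?thesis by (simp add: Nsum_cs)
qed

lemma l1_lower: "g \<in> S_set \<Longrightarrow> x \<in> Bbar \<Longrightarrow> Vmin (transpose g) \<le> l1norm (g *v x)"
proof -
  assume g: "g \<in> S_set" and x: "x \<in> Bbar"
  have x0: "\<forall>j. x $ j \<ge> 0" using x unfolding Bbar_def by auto
  have "Vmin (transpose g) = (\<Sum>j\<in>UNIV. Vmin (transpose g) * x $ j)"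
    using Bbar_sum[OF x] by (simp add: sum_distrib_left[symmetric])
  also have "\<dots> \<le> (\<Sum>j\<in>UNIV. cs g j * x $ j)"
    using x0 unfolding Vmin_transpose by (intro sum_mono mult_right_mono) auto
  also have "\<dots> = l1norm (g *v x)" using l1_formula S_nonneg[OF g] x0 by metis
  finally show ?thesis .
qed

lemma l1_lower_eps: "g \<in> S_set \<Longrightarrow> x \<in> Bbar \<Longrightarrow> (\<forall>j. x $ j \<ge> e) \<Longrightarrow> e * Nsum g \<le> l1norm (g *v x)"
proof -
  assume g: "g \<in> S_set" and x: "x \<in> Bbar" and e: "\<forall>j. x $ j \<ge> e"
  have x0: "\<forall>j. x $ j \<ge> 0" using x unfolding Bbar_def by auto
  have "e * Nsum g = (\<Sum>j\<in>UNIV. cs g j * e)" by (simp add: Nsum_cs sum_distrib_left mult.commute)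
  also have "\<dots> \<le> (\<Sum>j\<in>UNIV. cs g j * x $ j)"
    using e cs_nonneg[OF g] by (intro sum_mono mult_left_mono) auto
  also have "\<dots> = l1norm (g *v x)" using l1_formula S_nonneg[OF g] x0 by metis
  finally show ?thesis .
qed

lemma l1_pos: "g \<in> S_set \<Longrightarrow> x \<in> Bbar \<Longrightarrow> l1norm (g *v x) > 0"
  using Vmin_pos l1_lower by fastforce

lemma proj_Bbar:
  assumes g: "g \<in> S_set" and x: "x \<in> Bbar"
  shows "proj_act g x \<in> Bbar" "supp (proj_act g x) = img g (supp x)"
proof -
  have x0: "\<forall>j. x $ j \<ge> 0" using x unfolding Bbar_def by auto
  have p: "l1norm (g *v x) > 0" by (rule l1_pos[OF g x])
  show "proj_act g x \<in> Bbar"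
    unfolding Bbar_def proj_act_def using p mv_nonneg[OF S_nonneg[OF g] x0]
    by (auto simp: l1_scale)
  show "supp (proj_act g x) = img g (supp x)"
    unfolding proj_act_def using p by (simp add: supp_scale supp_mv[OF S_nonneg[OF g] x0])
qed

declare transpose_matrix_vector[simp del]

lemma cont_transpose: "continuous_on UNIV (transpose :: real^'q^'q \<Rightarrow> real^'q^'q)"
  unfolding transpose_def by (intro continuous_intros)

lemma meas_transpose[measurable (raw)]:
  fixes f :: "'a \<Rightarrow> real^'q^'q"
  assumes [measurable]: "f \<in> borel_measurable M"
  shows "(\<lambda>x. transpose (f x)) \<in> borel_measurable M"
  using measurable_compose[OF assms borel_measurable_continuous_onI[OF cont_transpose]] by simp

lemma img_eq_meas: "{g::real^'q^'q. img g J = K} \<in> sets borel"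
proof -
  have "{g::real^'q^'q. img g J = K} = {g\<in>space borel. \<forall>i. (i \<in> K) = (\<exists>j. j \<in> J \<and> g $ i $ j \<noteq> 0)}"
    unfolding img_def by auto
  also have "\<dots> \<in> sets borel" by measurable
  finally show ?thesis .
qed

lemma img_pred_meas: "{g::real^'q^'q. img g J \<in> D} \<in> sets borel"
proof -
  have "{g::real^'q^'q. img g J \<in> D} = (\<Union>K\<in>D. {g. img g J = K})" by auto
  also have "\<dots> \<in> sets borel" using img_eq_meas by (intro sets.finite_UN) auto
  finally show ?thesis .
qed

lemma supp_eq_meas: "{x\<in>Bbar. supp x = J} \<in> sets borel"
proof -
  have "{x\<in>Bbar. supp x = J} = {x\<in>space borel. x \<in> Bbar \<and> (\<forall>j. (x $ j \<noteq> 0) = (j \<in> J))}"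
    unfolding supp_def by auto
  also have "\<dots> \<in> sets borel" by measurable
  finally show ?thesis .
qed

lemma closed_C: "finite A \<Longrightarrow> closed {x::real^'q. \<exists>J\<in>A. \<forall>j. j \<notin> J \<longrightarrow> x $ j = 0}"
proof -
  assume A: "finite A"
  have "{x::real^'q. \<exists>J\<in>A. \<forall>j. j \<notin> J \<longrightarrow> x $ j = 0} = (\<Union>J\<in>A. \<Inter>j\<in>-J. {x. x $ j = 0})"
    by auto
  moreover have "closed {x::real^'q. x $ j = 0}" for j
    by (rule closed_Collect_eq) (intro continuous_intros)+
  ultimately show ?thesis using A by (auto intro!: closed_UN closed_INT)
qed

lemma Bbar_supp_ne: "x \<in> Bbar \<Longrightarrow> supp x \<noteq> {}"
proof
  assume "x \<in> Bbar" "supp x = {}"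
  then have "(\<Sum>j\<in>UNIV. x $ j) = 1" "\<forall>j. x $ j = 0" using Bbar_sum[of x] unfolding supp_def by auto
  then show False by simp
qed

lemma lprod_nonneg: "(\<And>k. X k \<in> S_set) \<Longrightarrow> \<forall>i j. lprod X n $ i $ j \<ge> (0::real)"
proof (induction n)
  case 0 then show ?case by (auto simp: mat_def)
next
  case (Suc n)
  then show ?case using mm_nonneg[OF S_nonneg[OF Suc.prems] Suc.IH] by simp
qed

lemma key_alg:
  fixes Y :: "nat \<Rightarrow> real^'q^'q"
  assumes YS: "\<And>k. Y k \<in> S_set"
    and step: "\<And>k K. K \<in> D \<Longrightarrow> img (transpose (Y k)) K \<in> D"
  shows "K \<in> D \<Longrightarrow> img (transpose (lprod Y n)) K \<in> D"
proof (induction n arbitrary: K)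
  case 0 then show ?case by (simp add: img_one)
next
  case (Suc n)
  have "transpose (lprod Y (Suc n)) = transpose (lprod Y n) ** transpose (Y n)"
    by (simp add: matrix_transpose_mul)
  moreover have "\<forall>i j. transpose (lprod Y n) $ i $ j \<ge> 0"
    using lprod_nonneg[OF YS] by (simp add: transpose_nth)
  moreover have "\<forall>i j. transpose (Y n) $ i $ j \<ge> 0"
    using S_nonneg[OF S_transpose[OF YS]] by simp
  ultimately have "img (transpose (lprod Y (Suc n))) K = img (transpose (lprod Y n)) (img (transpose (Y n)) K)"
    using img_mult by metis
  then show ?case using Suc.IH step[OF Suc.prems] by simp
qed

lemma nu_interior:
  fixes M :: "'w measure" and X :: "nat \<Rightarrow> 'w \<Rightarrow> real^'q^'q" and \<nu> :: "(real^'q) measure"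
  assumes P: "prob_space M"
    and Xm: "\<And>n. X n \<in> borel_measurable M"
    and ident: "\<And>n. distr M borel (X n) = distr M borel (X 0)"
    and inS: "\<And>n \<omega>. \<omega> \<in> space M \<Longrightarrow> X n \<omega> \<in> S_set"
    and pos: "measure M {\<omega>\<in>space M. \<exists>n\<ge>1. lprod (\<lambda>k. X k \<omega>) n \<in> S_pos} > 0"
    and nu_prob: "prob_space \<nu>" and nu_sets: "sets \<nu> = sets borel"
    and nu_B: "emeasure \<nu> Bbar = 1"
    and nu_inv: "mu_invariant (distr M borel (\<lambda>\<omega>. transpose (X 0 \<omega>))) \<nu>"
  shows "measure \<nu> {x\<in>Bbar. supp x = UNIV} = 1"
proof -
  interpret M: prob_space M by fact
  interpret n: prob_space \<nu> by fact
  define \<mu> where "\<mu> = distr M borel (\<lambda>\<omega>. transpose (X 0 \<omega>))"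
  have Xm'[measurable]: "X n \<in> borel_measurable M" for n by (rule Xm)
  interpret m: prob_space \<mu> unfolding \<mu>_def by (rule M.prob_space_distr) measurable
  have sm: "sets \<mu> = sets borel" unfolding \<mu>_def by simp
  have spm: "space \<mu> = UNIV" unfolding \<mu>_def by simp
  have spn: "space \<nu> = UNIV" using sets_eq_imp_space_eq[OF nu_sets] by simp
  have mu_k: "\<mu> = distr M borel (\<lambda>\<omega>. transpose (X k \<omega>))" for k
  proof -
    have "distr M borel (\<lambda>\<omega>. transpose (X k \<omega>)) = distr (distr M borel (X k)) borel transpose"
      by (subst distr_distr) (auto simp: comp_def)
    also have "\<dots> = distr (distr M borel (X 0)) borel transpose" by (subst ident[of k]) (rule refl)
    also have "\<dots> = \<mu>" unfolding \<mu>_def by (subst distr_distr) (auto simp: comp_def)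
    finally show ?thesis by simp
  qed
  have AE_transfer: "AE \<omega> in M. img (transpose (X k \<omega>)) J \<in> D" if "AE g in \<mu>. img g J \<in> D" for k J D
  proof -
    have "AE g in distr M borel (\<lambda>\<omega>. transpose (X k \<omega>)). img g J \<in> D" using that by (subst (asm) mu_k[of k])
    then show ?thesis
      by (subst (asm) AE_distr_iff) (auto simp: img_pred_meas)
  qed
  have mu_S: "AE g in \<mu>. g \<in> S_set"
    unfolding \<mu>_def by (subst AE_distr_iff) (auto intro!: S_transpose inS)
  have nu_Bbar: "AE x in \<nu>. x \<in> Bbar"
    using nu_B n.prob_eq_1[of Bbar] nu_sets n.emeasure_eq_measure by auto
  define E where "E J = {x::real^'q. x \<in> Bbar \<and> supp x = J}" for J :: "'q set"
  have Em[measurable]: "E J \<in> sets \<nu>" for J unfolding E_def nu_sets by (rule supp_eq_meas)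
  define A where "A = {J. J \<noteq> UNIV \<and> measure \<nu> (E J) > 0}"
  show ?thesis
  proof (cases "A = {}")
    case True
    have "measure \<nu> (Bbar - E UNIV) \<le> (\<Sum>J\<in>{J. J \<noteq> UNIV}. measure \<nu> (E J))"
    proof -
      have "Bbar - E UNIV = (\<Union>J\<in>{J. J \<noteq> UNIV}. E J)" unfolding E_def by auto
      then show ?thesis using n.finite_measure_subadditive_finite[of "{J. J \<noteq> UNIV}" E] Em by (auto simp: image_subset_iff)
    qed
    also have "\<dots> = 0"
    proof (intro sum.neutral ballI)
      fix J :: "'q set" assume "J \<in> {J. J \<noteq> UNIV}"
      then have "\<not> measure \<nu> (E J) > 0" using True unfolding A_def by auto
      then show "measure \<nu> (E J) = 0" using measure_nonneg[of \<nu> "E J"] by linarith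
    qed
    finally have "measure \<nu> (Bbar - E UNIV) = 0" using measure_nonneg antisym by blast
    moreover have "measure \<nu> Bbar = 1" using nu_B n.emeasure_eq_measure by simp
    moreover have "E UNIV \<subseteq> Bbar" unfolding E_def by auto
    ultimately have "measure \<nu> (E UNIV) = 1"
      using n.finite_measure_Diff[of Bbar "E UNIV"] nu_sets Em[of UNIV] by auto
    then show ?thesis unfolding E_def .
  next
    case False
    then obtain J0 where J0: "J0 \<in> A" by blast
    have Afin: "finite A" by simp
    define D where "D = {K. \<exists>J\<in>A. K \<subseteq> J}"
    define C where "C = {x::real^'q. \<exists>J\<in>A. \<forall>j. j \<notin> J \<longrightarrow> x $ j = 0}"
    have Ccl: "closed C" unfolding C_def using closed_C[OF Afin] .
    have Cb[measurable]: "C \<in> sets borel" using Ccl by (simp add: borel_closed)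
    have CD: "x \<in> C \<longleftrightarrow> supp x \<in> D" for x unfolding C_def D_def supp_def by auto
    have UD: "UNIV \<notin> D" unfolding D_def A_def by auto
    have AD: "A \<subseteq> D" unfolding D_def by auto
    have Ddown: "K \<subseteq> K' \<Longrightarrow> K' \<in> D \<Longrightarrow> K \<in> D" for K K' unfolding D_def by auto
    define h where "h x = measure \<mu> {g\<in>space \<mu>. proj_act g x \<in> C}" for x
    have invC: "measure \<nu> C = (\<integral>x. h x \<partial>\<nu>)" and hm[measurable]: "h \<in> borel_measurable \<nu>"
      using inv_closed[OF m.prob_space_axioms sm nu_prob nu_sets nu_inv[folded \<mu>_def] Ccl] unfolding h_def by auto
    have h01: "0 \<le> h x" "h x \<le> 1" for x unfolding h_def by auto
    have nullS: "measure \<mu> {g\<in>space \<mu>. g \<notin> S_set} = 0"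
    proof -
      have "measure \<mu> {g\<in>space \<mu>. g \<in> S_set} = 1" using mu_S m.prob_eq_1[of "{g\<in>space \<mu>. g \<in> S_set}"] sm by auto
      moreover have "{g\<in>space \<mu>. g \<notin> S_set} = space \<mu> - {g\<in>space \<mu>. g \<in> S_set}" by auto
      ultimately show ?thesis using m.prob_compl[of "{g\<in>space \<mu>. g \<in> S_set}"] sm by auto
    qed
    have h0: "h x = 0" if "x \<in> Bbar" "supp x = UNIV" for x
    proof -
      have "{g\<in>space \<mu>. proj_act g x \<in> C} \<subseteq> {g\<in>space \<mu>. g \<notin> S_set}"
      proof safe
        fix g assume g: "g \<in> S_set" "proj_act g x \<in> C"
        then have "supp (proj_act g x) \<in> D" using CD by blast
        moreover have "supp (proj_act g x) = UNIV" using proj_Bbar[OF g(1) that(1)] that(2) img_S_UNIV[OF g(1)] by simp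
        ultimately show False using UD by simp
      qed
      moreover have "{g\<in>space \<mu>. g \<notin> S_set} \<in> sets \<mu>"
      proof -
        have "{g\<in>space \<mu>. g \<notin> S_set} = space \<mu> - S_set" by auto
        also have "\<dots> \<in> sets \<mu>" using sm by (intro sets.Diff) auto
        finally show ?thesis .
      qed
      ultimately have "h x \<le> measure \<mu> {g\<in>space \<mu>. g \<notin> S_set}" unfolding h_def by (rule m.finite_measure_mono)
      then have "h x \<le> 0" using nullS by simp
      then show ?thesis using h01[of x] by simp
    qed
    have nu_good: "AE x in \<nu>. x \<in> Bbar \<and> (supp x \<in> A \<or> supp x = UNIV)"
    proof -
      have "AE x in \<nu>. \<forall>J. J \<notin> A \<and> J \<noteq> UNIV \<longrightarrow> x \<notin> E J"
      proof (subst AE_all_countable, intro allI)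
        fix J :: "'q set"
        show "AE x in \<nu>. J \<notin> A \<and> J \<noteq> UNIV \<longrightarrow> x \<notin> E J"
        proof (cases "J \<notin> A \<and> J \<noteq> UNIV")
          case True
          then have "measure \<nu> (E J) = 0" unfolding A_def using measure_nonneg[of \<nu> "E J"] by auto
          then have "E J \<in> null_sets \<nu>" using Em[of J] n.emeasure_eq_measure[of "E J"] by (auto simp: null_sets_def)
          from AE_not_in[OF this] show ?thesis by simp
        qed auto
      qed
      then show ?thesis using nu_Bbar by eventually_elim (auto simp: E_def)
    qed
    have ind_int: "integrable \<nu> (indicator C :: _ \<Rightarrow> real)"
      by (rule n.integrable_const_bound[where B=1]) (auto simp: nu_sets measurable_cong_sets[OF nu_sets refl])
    have h_int: "integrable \<nu> h"
      by (rule n.integrable_const_bound[where B=1]) (use h01 in auto)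
    have k_int: "integrable \<nu> (\<lambda>x. indicator C x * (1 - h x) :: real)"
    proof (rule n.integrable_const_bound[where B=1])
      have Cn[measurable]: "C \<in> sets \<nu>" using Cb nu_sets by simp
      show "(\<lambda>x. indicator C x * (1 - h x) :: real) \<in> borel_measurable \<nu>" by measurable
      show "AE x in \<nu>. norm (indicator C x * (1 - h x) :: real) \<le> 1" using h01 by (auto simp: indicator_def)
    qed
    have "(\<integral>x. indicator C x * (1 - h x) \<partial>\<nu>) = (\<integral>x. indicator C x - h x \<partial>\<nu>)"
    proof (rule integral_cong_AE)
      show "(\<lambda>x. indicator C x * (1 - h x) :: real) \<in> borel_measurable \<nu>" using k_int by auto
      show "(\<lambda>x. indicator C x - h x :: real) \<in> borel_measurable \<nu>" using ind_int h_int by auto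
      show "AE x in \<nu>. indicator C x * (1 - h x) = indicator C x - h x"
        using nu_good
      proof eventually_elim
        case (elim x)
        show ?case
        proof (cases "supp x = UNIV")
          case True
          then have "x \<notin> C" using CD UD by simp
          then show ?thesis using h0[of x] elim True by simp
        next
          case False
          then have "x \<in> C" using elim CD AD by auto
          then show ?thesis by simp
        qed
      qed
    qed
    also have "\<dots> = measure \<nu> C - (\<integral>x. h x \<partial>\<nu>)"
      using ind_int h_int spn by (simp add: integral_diff)
    also have "\<dots> = 0" using invC by simp
    finally have "(\<integral>x. indicator C x * (1 - h x) \<partial>\<nu>) = 0" .
    then have "AE x in \<nu>. indicator C x * (1 - h x) = 0"
      using integral_nonneg_eq_0_iff_AE[OF k_int] h01 by auto
    then have hC: "AE x in \<nu>. x \<in> C \<longrightarrow> h x = 1"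
      by eventually_elim (auto simp: indicator_def)
    have stepA: "AE g in \<mu>. img g J \<in> D" if JA: "J \<in> A" for J
    proof -
      obtain x where x: "x \<in> E J" "x \<in> C \<longrightarrow> h x = 1"
      proof (rule ccontr)
        assume "\<not> thesis"
        then have sub: "E J \<subseteq> {x\<in>space \<nu>. \<not> (x \<in> C \<longrightarrow> h x = 1)}" using that spn by auto
        from hC obtain N where N: "{x\<in>space \<nu>. \<not> (x \<in> C \<longrightarrow> h x = 1)} \<subseteq> N" "emeasure \<nu> N = 0" "N \<in> sets \<nu>"
          by (rule AE_E)
        have "measure \<nu> (E J) \<le> measure \<nu> N" using sub N by (intro n.finite_measure_mono) auto
        also have "\<dots> = 0" using N by (simp add: measure_def)
        finally show False using JA unfolding A_def by simp
      qed
      have xB: "x \<in> Bbar" "supp x = J" using x unfolding E_def by auto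
      have "x \<in> C" using xB JA CD AD by auto
      with x have hx: "h x = 1" by simp
      have pm: "(\<lambda>g. proj_act g x) \<in> borel_measurable \<mu>"
      proof -
        have "(\<lambda>g. proj_act g x) \<in> borel_measurable borel" by measurable
        then show ?thesis by (subst measurable_cong_sets[OF sm refl])
      qed
      have "{g\<in>space \<mu>. proj_act g x \<in> C} \<in> sets \<mu>"
        using measurable_sets[OF pm Cb] by (simp add: vimage_def Int_def conj_commute)
      then have "AE g in \<mu>. g \<in> {g\<in>space \<mu>. proj_act g x \<in> C}"
        using m.prob_eq_1 hx unfolding h_def by auto
      then show ?thesis using mu_S
      proof eventually_elim
        case (elim g)
        then have "supp (proj_act g x) \<in> D" using CD by auto
        then show ?case using proj_Bbar[OF _ xB(1), of g] elim xB by simp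
      qed
    qed
    have AEM: "AE \<omega> in M. \<forall>k. \<forall>J. J \<in> A \<longrightarrow> img (transpose (X k \<omega>)) J \<in> D"
    proof (subst AE_all_countable, intro allI, subst AE_all_countable, intro allI)
      fix k and J :: "'q set"
      show "AE \<omega> in M. J \<in> A \<longrightarrow> img (transpose (X k \<omega>)) J \<in> D"
      proof (cases "J \<in> A")
        case True
        then show ?thesis using AE_transfer[OF stepA[OF True], of k] by simp
      qed auto
    qed
    have J0ne: "J0 \<noteq> {}"
    proof -
      have "measure \<nu> (E J0) > 0" using J0 unfolding A_def by simp
      then have "E J0 \<noteq> {}" by auto
      then obtain x where "x \<in> Bbar" "supp x = J0" unfolding E_def by auto
      then show ?thesis using Bbar_supp_ne by auto
    qed
    define Pset where "Pset = {\<omega>\<in>space M. \<exists>n\<ge>1. lprod (\<lambda>k. X k \<omega>) n \<in> S_pos}"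
    have "AE \<omega> in M. \<not> (\<exists>n\<ge>1. lprod (\<lambda>k. X k \<omega>) n \<in> S_pos)"
      using AEM AE_space
    proof eventually_elim
      case (elim \<omega>)
      have step: "img (transpose (X k \<omega>)) K \<in> D" if KD: "K \<in> D" for k K
      proof -
        obtain J where J: "J \<in> A" "K \<subseteq> J" using KD unfolding D_def by auto
        then have "img (transpose (X k \<omega>)) K \<subseteq> img (transpose (X k \<omega>)) J" using img_mono[OF J(2)] by blast
        moreover have "img (transpose (X k \<omega>)) J \<in> D" using elim J by auto
        ultimately show ?thesis using Ddown by blast
      qed
      have all: "img (transpose (lprod (\<lambda>k. X k \<omega>) n)) J0 \<in> D" for n
        by (rule key_alg[where Y="\<lambda>k. X k \<omega>"]) (use inS elim step J0 AD in auto)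
      show ?case
      proof
        assume "\<exists>n\<ge>1. lprod (\<lambda>k. X k \<omega>) n \<in> S_pos"
        then obtain n where "lprod (\<lambda>k. X k \<omega>) n \<in> S_pos" by auto
        then have "img (transpose (lprod (\<lambda>k. X k \<omega>) n)) J0 = UNIV"
          using img_pos J0ne Spos_transpose by blast
        then show False using all[of n] UD by simp
      qed
    qed
    then have "AE \<omega> in M. \<omega> \<notin> Pset" by (rule eventually_mono) (simp add: Pset_def)
    then obtain N where N: "{\<omega>\<in>space M. \<not> \<omega> \<notin> Pset} \<subseteq> N" "emeasure M N = 0" "N \<in> sets M"
      by (rule AE_E)
    have PN: "Pset \<subseteq> N"
    proof
      fix \<omega> assume w: "\<omega> \<in> Pset"
      then have "\<omega> \<in> space M" by (simp add: Pset_def)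
      with w N(1) show "\<omega> \<in> N" by blast
    qed
    have "measure M Pset = 0"
    proof (cases "Pset \<in> sets M")
      case True
      have "measure M Pset \<le> measure M N" using PN N(3) by (rule M.finite_measure_mono)
      also have "\<dots> = 0" using N(2) by (simp add: measure_def)
      finally show ?thesis using measure_nonneg[of M Pset] by linarith
    qed (rule measure_notin_sets)
    then show ?thesis using pos unfolding Pset_def by simp
  qed
qed



lemma reg_shift:
  fixes L a :: "real \<Rightarrow> real" and \<alpha> c t :: real
  assumes L_sv: "slowly_varying L" and t: "t > 0"
    and lim: "((\<lambda>u. u powr \<alpha> / L u * a u) \<longlongrightarrow> c) at_top"
  shows "((\<lambda>u. u powr \<alpha> / L u * a (t * u)) \<longlongrightarrow> t powr (- \<alpha>) * c) at_top"
proof -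
  have L1: "((\<lambda>u. L (t * u) / L u) \<longlongrightarrow> 1) at_top" using L_sv t unfolding slowly_varying_def by blast
  have Lpos: "\<forall>\<^sub>F u in at_top. L u > 0" using L_sv unfolding slowly_varying_def by blast
  have tu: "filterlim (\<lambda>u. t * u) at_top at_top"
    by (rule filterlim_tendsto_pos_mult_at_top[OF tendsto_const t filterlim_ident])
  have lim2: "((\<lambda>u. (t * u) powr \<alpha> / L (t * u) * a (t * u)) \<longlongrightarrow> c) at_top"
    using filterlim_compose[OF lim tu] by (simp add: comp_def)
  have Lpos2: "\<forall>\<^sub>F u in at_top. L (t * u) > 0" using filterlim_iff[THEN iffD1, OF tu, rule_format, OF Lpos] .
  have "((\<lambda>u. (t powr (- \<alpha>) * (L (t * u) / L u)) * ((t * u) powr \<alpha> / L (t * u) * a (t * u))) \<longlongrightarrow> (t powr (- \<alpha>) * 1) * c) at_top"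
    by (intro tendsto_mult tendsto_const L1 lim2)
  moreover have "\<forall>\<^sub>F u in at_top. (t powr (- \<alpha>) * (L (t * u) / L u)) * ((t * u) powr \<alpha> / L (t * u) * a (t * u)) = u powr \<alpha> / L u * a (t * u)"
    using Lpos Lpos2 eventually_gt_at_top[of 0]
  proof eventually_elim
    case (elim u)
    have "(t * u) powr \<alpha> = t powr \<alpha> * u powr \<alpha>" using t elim by (simp add: powr_mult)
    moreover have "t powr (- \<alpha>) * t powr \<alpha> = 1" using t by (simp add: powr_minus field_simps)
    ultimately show ?case using elim by (simp add: field_simps)
  qed
  ultimately show ?thesis by (simp add: tendsto_cong)
qed

theorem mainTheorem9:
  fixes M :: "'w measure" and X :: "nat \<Rightarrow> 'w \<Rightarrow> real^'q^'q"
    and \<nu> :: "(real^'q) measure" and L :: "real \<Rightarrow> real"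
    and \<alpha> c_plus c_minus :: real
  assumes P: "prob_space M"
    and indep: "prob_space.indep_vars M (\<lambda>_. borel) X UNIV"
    and ident: "\<And>n. distr M borel (X n) = distr M borel (X 0)"
    and inS: "\<And>n \<omega>. \<omega> \<in> space M \<Longrightarrow> X n \<omega> \<in> S_set"
    and pos: "measure M {\<omega>\<in>space M. \<exists>n\<ge>1. lprod (\<lambda>k. X k \<omega>) n \<in> S_pos} > 0"
    and nu_prob: "prob_space \<nu>" and nu_sets: "sets \<nu> = sets borel"
    and nu_B: "emeasure \<nu> Bbar = 1"
    and nu_inv: "mu_invariant (distr M borel (\<lambda>\<omega>. transpose (X 0 \<omega>))) \<nu>"
    and alpha: "0 < \<alpha>" "\<alpha> \<le> 2"
    and L_sv: "slowly_varying L"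
    and L_unb: "\<alpha> = 2 \<Longrightarrow> \<not> (\<exists>B. \<forall>\<^sub>F u in at_top. L u \<le> B)"
    and c: "c_plus \<ge> 0" "c_minus \<ge> 0" "c_plus + c_minus > 0"
    and tail_plus: "((\<lambda>u. u powr \<alpha> / L u * measure M {\<omega>\<in>space M. Nsum (X 0 \<omega>) > exp u})
                      \<longlongrightarrow> c_plus) at_top"
    and tail_minus: "((\<lambda>u. u powr \<alpha> / L u * measure M {\<omega>\<in>space M. Nsum (X 0 \<omega>) \<le> exp (- u)})
                      \<longlongrightarrow> c_minus) at_top"
    and tail_V: "Limsup at_top (\<lambda>u. ereal (u powr \<alpha> / L u * measure M {\<omega>\<in>space M. Vmin (X 0 \<omega>) \<le> exp (- u)}))
                   < \<infinity>"
  shows "let \<mu> = distr M borel (\<lambda>\<omega>. transpose (X 0 \<omega>));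
             F = (\<lambda>u. measure (\<mu> \<Otimes>\<^sub>M \<nu>) {(g, x). g \<in> S_set \<and> x \<in> Bbar \<and> xi g x \<le> u})
         in ((\<lambda>u. u powr \<alpha> / L u * (1 - F u)) \<longlongrightarrow> c_plus) at_top
          \<and> ((\<lambda>u. u powr \<alpha> / L u * F (- u)) \<longlongrightarrow> c_minus) at_top"
proof -
  interpret M: prob_space M by fact
  interpret n: prob_space \<nu> by fact
  have Xm[measurable]: "X k \<in> borel_measurable M" for k using indep unfolding M.indep_vars_def by auto
  define \<mu> where "\<mu> = distr M borel (\<lambda>\<omega>. transpose (X 0 \<omega>))"
  interpret m: prob_space \<mu> unfolding \<mu>_def by (rule M.prob_space_distr) measurable
  have sm: "sets \<mu> = sets borel" unfolding \<mu>_def by simp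
  have spm: "space \<mu> = UNIV" unfolding \<mu>_def by simp
  have spn: "space \<nu> = UNIV" using sets_eq_imp_space_eq[OF nu_sets] by simp
  have nu_int: "measure \<nu> {x\<in>Bbar. supp x = UNIV} = 1"
    by (rule nu_interior[OF P Xm ident inS pos nu_prob nu_sets nu_B nu_inv])
  interpret PP: pair_prob_space \<mu> \<nu> by unfold_locales
  have sPP: "sets (\<mu> \<Otimes>\<^sub>M \<nu>) = sets borel"
  proof -
    have "sets (\<mu> \<Otimes>\<^sub>M \<nu>) = sets (borel \<Otimes>\<^sub>M borel)" by (rule sets_pair_measure_cong[OF sm nu_sets])
    also have "\<dots> = sets borel" by (simp only: borel_prod)
    finally show ?thesis .
  qed
  have rect: "measure (\<mu> \<Otimes>\<^sub>M \<nu>) (A \<times> B) = measure \<mu> A * measure \<nu> B"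
    if "A \<in> sets borel" "B \<in> sets borel" for A B
  proof -
    have "emeasure (\<mu> \<Otimes>\<^sub>M \<nu>) (A \<times> B) = emeasure \<mu> A * emeasure \<nu> B"
      using that sm nu_sets by (intro n.emeasure_pair_measure_Times) auto
    then show ?thesis by (simp add: measure_def enn2real_mult)
  qed
  have muM: "measure \<mu> A = measure M {\<omega>\<in>space M. transpose (X 0 \<omega>) \<in> A}" if "A \<in> sets borel" for A
    unfolding \<mu>_def using that by (subst measure_distr) (auto simp: vimage_def Int_def conj_commute)
  have muS1: "measure \<mu> S_set = 1"
  proof -
    have "{\<omega>\<in>space M. transpose (X 0 \<omega>) \<in> S_set} = space M" using inS S_transpose by auto
    then show ?thesis using muM[of S_set] by (simp add: M.prob_space)
  qed
  have muS: "measure \<mu> {g\<in>A. g \<in> S_set} = measure \<mu> A" if "A \<in> sets borel" for A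
  proof -
    have "- S_set \<in> null_sets \<mu>"
    proof -
      have "measure \<mu> (space \<mu> - S_set) = 0" using m.prob_compl[of S_set] muS1 sm by simp
      then have "measure \<mu> (- S_set) = 0" using spm by (simp add: Compl_eq_Diff_UNIV)
      moreover have "- S_set \<in> sets \<mu>" using sm by simp
      ultimately show ?thesis using m.emeasure_eq_measure[of "- S_set"] by (auto simp: null_sets_def)
    qed
    moreover have "{g\<in>A. g \<in> S_set} = A - (- S_set)" by auto
    ultimately show ?thesis using measure_Diff_null_set[of A \<mu> "- S_set"] that sm by simp
  qed
  have nuB1: "measure \<nu> Bbar = 1" using nu_B n.emeasure_eq_measure by simp
  define T where "T u = {(g::real^'q^'q, x::real^'q). g \<in> S_set \<and> x \<in> Bbar \<and> xi g x \<le> u}" for u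
  have Tm: "T u \<in> sets (\<mu> \<Otimes>\<^sub>M \<nu>)" for u
  proof -
    have "T u = {p\<in>space (borel \<Otimes>\<^sub>M borel). fst p \<in> S_set \<and> snd p \<in> Bbar \<and> xi (fst p) (snd p) \<le> u}"
      unfolding T_def by (auto simp: space_pair_measure)
    also have "\<dots> \<in> sets (borel \<Otimes>\<^sub>M borel)" by measurable
    finally show ?thesis using sets_pair_measure_cong[OF sm nu_sets] by simp
  qed
  define F where "F u = measure (\<mu> \<Otimes>\<^sub>M \<nu>) (T u)" for u
  define SB where "SB = (S_set :: (real^'q^'q) set) \<times> (Bbar :: (real^'q) set)"
  have SBm: "SB \<in> sets (\<mu> \<Otimes>\<^sub>M \<nu>)" unfolding SB_def sPP by (simp add: borel_prod[symmetric])
  have SB1: "measure (\<mu> \<Otimes>\<^sub>M \<nu>) SB = 1" unfolding SB_def using rect muS1 nuB1 by simp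
  have TSB: "T u \<subseteq> SB" for u unfolding T_def SB_def by auto
  define aN where "aN u = measure \<mu> {g::real^'q^'q. Nsum g > exp u}" for u
  define bN where "bN u = measure \<mu> {g::real^'q^'q. Nsum g \<le> exp (- u)}" for u
  define vV where "vV u = measure \<mu> {g::real^'q^'q. Vmin (transpose g) \<le> exp (- u)}" for u
  define Be where "Be e = {x::real^'q. x \<in> Bbar \<and> (\<forall>j. x $ j \<ge> e)}" for e
  have Bem: "Be e \<in> sets borel" for e
  proof -
    have "Be e = {x\<in>space borel. x \<in> Bbar \<and> (\<forall>j. x $ j \<ge> e)}" unfolding Be_def by auto
    also have "\<dots> \<in> sets borel" by measurable
    finally show ?thesis .
  qed
  define \<beta> where "\<beta> e = measure \<nu> (Be e)" for e
  have sNm: "{g::real^'q^'q. Nsum g > c} \<in> sets borel" "{g::real^'q^'q. Nsum g \<le> c} \<in> sets borel"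
    "{g::real^'q^'q. Vmin (transpose g) \<le> c}  \<in> sets borel" for c
  proof -
    have "{g::real^'q^'q. Nsum g > c} = {g\<in>space borel. Nsum g > c}" by simp
    also have "\<dots> \<in> sets borel" by measurable
    finally show "{g::real^'q^'q. Nsum g > c} \<in> sets borel" .
    have "{g::real^'q^'q. Nsum g \<le> c} = {g\<in>space borel. Nsum g \<le> c}" by simp
    also have "\<dots> \<in> sets borel" by measurable
    finally show "{g::real^'q^'q. Nsum g \<le> c} \<in> sets borel" .
    have "{g::real^'q^'q. Vmin (transpose g) \<le> c} = {g\<in>space borel. Vmin (transpose g) \<le> c}" by simp
    also have "\<dots> \<in> sets borel" by measurable
    finally show "{g::real^'q^'q. Vmin (transpose g) \<le> c} \<in> sets borel" .
  qed
  have aN_M: "measure M {\<omega>\<in>space M. Nsum (X 0 \<omega>) > exp u} = aN u" for u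
    unfolding aN_def by (subst muM[OF sNm(1)]) (simp add: Nsum_transpose)
  have bN_M: "measure M {\<omega>\<in>space M. Nsum (X 0 \<omega>) \<le> exp (- u)} = bN u" for u
    unfolding bN_def by (subst muM[OF sNm(2)]) (simp add: Nsum_transpose)
  have vV_M: "measure M {\<omega>\<in>space M. Vmin (X 0 \<omega>) \<le> exp (- u)} = vV u" for u
    unfolding vV_def by (subst muM[OF sNm(3)]) simp
  have Fm: "measure (\<mu> \<Otimes>\<^sub>M \<nu>) (SB - T u) = 1 - F u" for u
    using PP.finite_measure_Diff[OF SBm Tm TSB] SB1 unfolding F_def by simp
  have SBTm: "SB - T u \<in> sets (\<mu> \<Otimes>\<^sub>M \<nu>)" for u using SBm Tm by auto
  have U1: "1 - F u \<le> aN u" for u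
  proof -
    have "SB - T u \<subseteq> {g. Nsum g > exp u} \<times> UNIV"
    proof safe
      fix g :: "real^'q^'q" and x :: "real^'q" assume "(g, x) \<in> SB" "(g, x) \<notin> T u"
      then have g: "g \<in> S_set" and x: "x \<in> Bbar" and xu: "\<not> xi g x \<le> u" unfolding SB_def T_def by auto
      have p: "l1norm (g *v x) > 0" by (rule l1_pos[OF g x])
      have "u < ln (l1norm (g *v x))" using xu unfolding xi_def by simp
      then have "exp u < l1norm (g *v x)" using p by (metis exp_less_cancel_iff exp_ln)
      then show "exp u < Nsum g" using l1_upper[OF g x] by simp
    qed simp
    moreover have "{g. Nsum g > exp u} \<times> UNIV \<in> sets (\<mu> \<Otimes>\<^sub>M \<nu>)" unfolding sPP
      using sNm(1) by (simp add: borel_prod[symmetric])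
    ultimately have "measure (\<mu> \<Otimes>\<^sub>M \<nu>) (SB - T u) \<le> measure (\<mu> \<Otimes>\<^sub>M \<nu>) ({g. Nsum g > exp u} \<times> UNIV)"
      by (rule PP.finite_measure_mono)
    also have "\<dots> = aN u" unfolding aN_def using rect[OF sNm(1)] n.prob_space spn by simp
    finally show ?thesis using Fm by simp
  qed
  have U2: "aN (u - ln e) * \<beta> e \<le> 1 - F u" if e: "0 < e" for u e
  proof -
    have "{g. g \<in> {g. Nsum g > exp (u - ln e)} \<and> g \<in> S_set} \<times> Be e \<subseteq> SB - T u"
    proof safe
      fix g :: "real^'q^'q" and x :: "real^'q" assume g: "g \<in> S_set" and N: "exp (u - ln e) < Nsum g" and xB: "x \<in> Be e"
      then have x: "x \<in> Bbar" "\<forall>j. x $ j \<ge> e" unfolding Be_def by auto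
      show "(g, x) \<in> SB" unfolding SB_def using g x by simp
      assume "(g, x) \<in> T u"
      then have xu: "xi g x \<le> u" unfolding T_def by simp
      have p: "l1norm (g *v x) > 0" by (rule l1_pos[OF g x(1)])
      have "exp (u - ln e) = exp u / e" using e by (simp add: exp_diff)
      then have "exp u < e * Nsum g" using mult_strict_left_mono[OF N e] e by (simp add: field_simps)
      then have "exp u < l1norm (g *v x)" using l1_lower_eps[OF g x] by simp
      then have "u < ln (l1norm (g *v x))" using p by (metis exp_less_cancel_iff exp_ln)
      then show False using xu unfolding xi_def by simp
    qed
    moreover have "{g. g \<in> {g. Nsum g > exp (u - ln e)} \<and> g \<in> S_set} \<in> sets borel"
      using sNm(1) by auto
    ultimately have "measure (\<mu> \<Otimes>\<^sub>M \<nu>) ({g. g \<in> {g. Nsum g > exp (u - ln e)} \<and> g \<in> S_set} \<times> Be e) \<le> measure (\<mu> \<Otimes>\<^sub>M \<nu>) (SB - T u)"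
      using SBTm by (intro PP.finite_measure_mono) auto
    moreover have "measure (\<mu> \<Otimes>\<^sub>M \<nu>) ({g. g \<in> {g. Nsum g > exp (u - ln e)} \<and> g \<in> S_set} \<times> Be e) = aN (u - ln e) * \<beta> e"
      using rect[OF _ Bem] sNm(1) muS[OF sNm(1)] unfolding aN_def \<beta>_def by auto
    ultimately show ?thesis using Fm by simp
  qed
  have L1: "bN u \<le> F (- u)" for u
  proof -
    have "{g. g \<in> {g. Nsum g \<le> exp (- u)} \<and> g \<in> S_set} \<times> Bbar \<subseteq> T (- u)"
    proof safe
      fix g :: "real^'q^'q" and x :: "real^'q" assume g: "g \<in> S_set" and N: "Nsum g \<le> exp (- u)" and x: "x \<in> Bbar"
      have p: "l1norm (g *v x) > 0" by (rule l1_pos[OF g x])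
      have "l1norm (g *v x) \<le> exp (- u)" using l1_upper[OF g x] N by simp
      then have "ln (l1norm (g *v x)) \<le> - u" using p by (metis exp_le_cancel_iff exp_ln)
      then show "(g, x) \<in> T (- u)" unfolding T_def xi_def using g x by simp
    qed
    moreover have "{g. g \<in> {g. Nsum g \<le> exp (- u)} \<and> g \<in> S_set} \<in> sets borel"
      using sNm(2) by auto
    ultimately have "measure (\<mu> \<Otimes>\<^sub>M \<nu>) ({g. g \<in> {g. Nsum g \<le> exp (- u)} \<and> g \<in> S_set} \<times> Bbar) \<le> F (- u)"
      unfolding F_def using Tm by (intro PP.finite_measure_mono) auto
    moreover have "measure (\<mu> \<Otimes>\<^sub>M \<nu>) ({g. g \<in> {g. Nsum g \<le> exp (- u)} \<and> g \<in> S_set} \<times> Bbar) = bN u"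
      using rect[OF _ Bbar_meas] sNm(2) muS[OF sNm(2)] nuB1 unfolding bN_def by auto
    ultimately show ?thesis by simp
  qed
  have L2: "F (- u) \<le> bN (u + ln e) + vV u * (1 - \<beta> e)" if e: "0 < e" for u e
  proof -
    have "T (- u) \<subseteq> ({g. Nsum g \<le> exp (- (u + ln e))} \<times> UNIV) \<union> ({g. Vmin (transpose g) \<le> exp (- u)} \<times> (Bbar - Be e))"
    proof (rule subsetI)
      fix p assume pT: "p \<in> T (- u)"
      obtain g :: "real^'q^'q" and x :: "real^'q" where pgx: "p = (g, x)" by (cases p)
      from pT have "(g, x) \<in> T (- u)" unfolding pgx .
      then have g: "g \<in> S_set" and x: "x \<in> Bbar" and xu: "ln (l1norm (g *v x)) \<le> - u"
        unfolding T_def xi_def by auto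
      have p: "l1norm (g *v x) > 0" by (rule l1_pos[OF g x])
      have le: "l1norm (g *v x) \<le> exp (- u)" using xu p by (metis exp_le_cancel_iff exp_ln)
      show "p \<in> ({g. Nsum g \<le> exp (- (u + ln e))} \<times> UNIV) \<union> ({g. Vmin (transpose g) \<le> exp (- u)} \<times> (Bbar - Be e))"
      proof (cases "x \<in> Be e")
        case True
        then have "\<forall>j. x $ j \<ge> e" unfolding Be_def by auto
        then have "e * Nsum g \<le> exp (- u)" using order_trans[OF l1_lower_eps[OF g x] le] by blast
        moreover have "exp (- (u + ln e)) = exp (- u) / e" using e by (simp add: exp_diff exp_minus field_simps exp_add)
        moreover have "Nsum g \<le> exp (- u) / e" using e \<open>e * Nsum g \<le> exp (- u)\<close> by (simp add: pos_le_divide_eq mult.commute)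
        ultimately have "Nsum g \<le> exp (- (u + ln e))" by simp
        then show ?thesis using pgx by simp
      next
        case False
        then show ?thesis using x le l1_lower[OF g x] pgx by simp
      qed
    qed
    moreover have R1: "{g. Nsum g \<le> exp (- (u + ln e))} \<times> (UNIV::(real^'q) set) \<in> sets (\<mu> \<Otimes>\<^sub>M \<nu>)"
      unfolding sPP using sNm(2) by (simp add: borel_prod[symmetric])
    moreover have R2: "{g. Vmin (transpose g) \<le> exp (- u)} \<times> (Bbar - Be e) \<in> sets (\<mu> \<Otimes>\<^sub>M \<nu>)"
      unfolding sPP using sNm(3) Bem Bbar_meas by (simp add: borel_prod[symmetric])
    ultimately have "F (- u) \<le> measure (\<mu> \<Otimes>\<^sub>M \<nu>) (({g. Nsum g \<le> exp (- (u + ln e))} \<times> UNIV) \<union> ({g. Vmin (transpose g) \<le> exp (- u)} \<times> (Bbar - Be e)))"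
      unfolding F_def by (intro PP.finite_measure_mono) auto
    also have "\<dots> \<le> measure (\<mu> \<Otimes>\<^sub>M \<nu>) ({g. Nsum g \<le> exp (- (u + ln e))} \<times> UNIV) + measure (\<mu> \<Otimes>\<^sub>M \<nu>) ({g. Vmin (transpose g) \<le> exp (- u)} \<times> (Bbar - Be e))"
      using R1 R2 by (rule measure_Un_le)
    also have "\<dots> = bN (u + ln e) + vV u * (1 - \<beta> e)"
    proof -
      have "measure \<nu> (Bbar - Be e) = 1 - \<beta> e"
        using n.finite_measure_Diff[of Bbar "Be e"] nu_sets Bem nuB1 unfolding \<beta>_def Be_def by auto
      then show ?thesis using rect[OF sNm(2)] rect[OF sNm(3)] Bem Bbar_meas n.prob_space spn
        unfolding bN_def vV_def by (simp add: minus_add_distrib)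
    qed
    finally show ?thesis .
  qed
  have beta01: "0 \<le> \<beta> e" "\<beta> e \<le> 1" for e unfolding \<beta>_def by auto
  define en where "en n = inverse (real (Suc (Suc n)))" for n
  have en_pos: "0 < en n" for n unfolding en_def by simp
  have betalim: "(\<lambda>n. \<beta> (en n)) \<longlonglongrightarrow> 1"
  proof -
    have inc: "incseq (\<lambda>n. Be (en n))"
    proof (rule incseq_SucI)
      fix n
      have "en (Suc n) \<le> en n" unfolding en_def by (simp add: field_simps)
      then show "Be (en n) \<subseteq> Be (en (Suc n))" unfolding Be_def by (auto intro: order_trans)
    qed
    have rng: "range (\<lambda>n. Be (en n)) \<subseteq> sets \<nu>" using Bem nu_sets by auto
    have un: "(\<Union>n. Be (en n)) = {x\<in>Bbar. supp x = UNIV}"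
    proof safe
      fix x n j assume "x \<in> Be (en n)"
      then have "x $ j \<ge> en n" unfolding Be_def by auto
      then have "x $ j \<noteq> 0" using en_pos[of n] by auto
      then show "j \<in> supp x" unfolding supp_def by simp
    next
      fix x n assume "x \<in> Be (en n)" then show "x \<in> Bbar" unfolding Be_def by auto
    next
      fix x :: "real^'q" assume x: "x \<in> Bbar" and s: "supp x = UNIV"
      have xp: "x $ j > 0" for j
      proof -
        have "x $ j \<ge> 0" using x unfolding Bbar_def by auto
        moreover have "x $ j \<noteq> 0" using s unfolding supp_def by auto
        ultimately show ?thesis by simp
      qed
      define m where "m = Min (range (\<lambda>j. x $ j))"
      have mp: "m > 0" unfolding m_def using xp by (subst Min_gr_iff) auto
      have mle: "m \<le> x $ j" for j unfolding m_def by (rule Min_le) auto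
      obtain n0 :: nat where n0: "0 < n0" "inverse (real n0) < m" using ex_inverse_of_nat_less[OF mp] by auto
      have "en n0 \<le> inverse (real n0)" unfolding en_def using n0(1) by (simp add: field_simps)
      then have "\<forall>j. x $ j \<ge> en n0" using n0 mle by (meson less_le_trans less_imp_le order_trans)
      then show "x \<in> (\<Union>n. Be (en n))" using x unfolding Be_def by auto
    qed simp
    show ?thesis using n.finite_Lim_measure_incseq[OF rng inc] un nu_int unfolding \<beta>_def by simp
  qed
  define f where "f u = u powr \<alpha> / L u" for u
  have fpos: "\<forall>\<^sub>F u in at_top. f u \<ge> 0"
  proof -
    have "\<forall>\<^sub>F u in at_top. L u > 0" using L_sv unfolding slowly_varying_def by blast
    then show ?thesis by eventually_elim (simp add: f_def)
  qed
  have tp: "((\<lambda>u. f u * aN u) \<longlongrightarrow> c_plus) at_top" using tail_plus unfolding f_def by (simp add: aN_M)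
  have tm: "((\<lambda>u. f u * bN u) \<longlongrightarrow> c_minus) at_top" using tail_minus unfolding f_def by (simp add: bN_M)
  obtain K where K: "\<forall>\<^sub>F u in at_top. f u * vV u < K"
  proof -
    let ?l = "Limsup at_top (\<lambda>u. ereal (u powr \<alpha> / L u * measure M {\<omega>\<in>space M. Vmin (X 0 \<omega>) \<le> exp (- u)}))"
    obtain K where "?l < ereal K"
    proof (cases ?l)
      case (real r) then show ?thesis using that[of "r + 1"] by simp
    next
      case PInf then show ?thesis using tail_V by simp
    next
      case MInf then show ?thesis using that[of 0] by simp
    qed
    from Limsup_lessD[OF this] have "\<forall>\<^sub>F u in at_top. f u * vV u < K"
      by eventually_elim (simp add: f_def vV_M)
    then show ?thesis by (rule that)
  qed
  define K' where "K' = max K 0"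
  have aN_mono: "aN s' \<le> aN s" if "s \<le> s'" for s s'
  proof -
    have le: "exp s \<le> exp s'" using that by simp
    have "{g::real^'q^'q. Nsum g > exp s'} \<subseteq> {g. Nsum g > exp s}"
    proof
      fix g assume "g \<in> {g::real^'q^'q. Nsum g > exp s'}"
      then have "Nsum g > exp s'" by simp
      then have "Nsum g > exp s" using le by linarith
      then show "g \<in> {g. Nsum g > exp s}" by simp
    qed
    then show ?thesis unfolding aN_def using sNm(1) sm by (intro m.finite_measure_mono) auto
  qed
  have bN_mono: "bN s' \<le> bN s" if "s \<le> s'" for s s'
  proof -
    have le: "exp (- s') \<le> exp (- s)" using that by simp
    have "{g::real^'q^'q. Nsum g \<le> exp (- s')} \<subseteq> {g. Nsum g \<le> exp (- s)}"
    proof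
      fix g assume "g \<in> {g::real^'q^'q. Nsum g \<le> exp (- s')}"
      then have "Nsum g \<le> exp (- s')" by simp
      then have "Nsum g \<le> exp (- s)" using le by linarith
      then show "g \<in> {g. Nsum g \<le> exp (- s)}" by simp
    qed
    then show ?thesis unfolding bN_def using sNm(2) sm by (intro m.finite_measure_mono) auto
  qed
  have lim1: "((\<lambda>u. f u * (1 - F u)) \<longlongrightarrow> c_plus) at_top"
  proof (rule order_tendstoI)
    fix a assume a: "a < c_plus"
    define tn where "tn n = 1 + inverse (real (Suc n))" for n
    have tl: "tn \<longlonglongrightarrow> 1 + 0" unfolding tn_def by (intro tendsto_add tendsto_const LIMSEQ_inverse_real_of_nat)
    have "(\<lambda>n. tn n powr (- \<alpha>) * c_plus * \<beta> (en n)) \<longlonglongrightarrow> 1 powr (- \<alpha>) * c_plus * 1"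
      using tl by (intro tendsto_mult tendsto_const tendsto_powr betalim) auto
    then have "\<forall>\<^sub>F n in sequentially. a < tn n powr (- \<alpha>) * c_plus * \<beta> (en n)"
      using a by (intro order_tendstoD(1)) auto
    then obtain n where n: "a < tn n powr (- \<alpha>) * c_plus * \<beta> (en n)" by (auto simp: eventually_sequentially)
    define t where "t = tn n"
    define e where "e = en n"
    have t1: "t > 1" unfolding t_def tn_def by simp
    have e0: "e > 0" unfolding e_def by (rule en_pos)
    have "((\<lambda>u. f u * aN (t * u) * \<beta> e) \<longlongrightarrow> t powr (- \<alpha>) * c_plus * \<beta> e) at_top"
    proof -
      have "((\<lambda>u. f u * aN (t * u)) \<longlongrightarrow> t powr (- \<alpha>) * c_plus) at_top"
        using reg_shift[OF L_sv _ tp[unfolded f_def], of t] t1 unfolding f_def by simp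
      then show ?thesis by (rule tendsto_mult[OF _ tendsto_const])
    qed
    then have ev1: "\<forall>\<^sub>F u in at_top. a < f u * aN (t * u) * \<beta> e"
      using n unfolding t_def e_def by (intro order_tendstoD(1)) auto
    have ev2: "\<forall>\<^sub>F u in at_top. u - ln e \<le> t * u"
    proof -
      have "\<forall>\<^sub>F u in at_top. u \<ge> - ln e / (t - 1)" by (rule eventually_ge_at_top)
      then show ?thesis
      proof eventually_elim
        case (elim u)
        have "(- ln e / (t - 1)) * (t - 1) \<le> u * (t - 1)" using elim t1 by (intro mult_right_mono) auto
        moreover have "(- ln e / (t - 1)) * (t - 1) = - ln e" using t1 by simp
        ultimately have "- ln e \<le> (t - 1) * u" by (simp add: mult.commute)
        then show ?case by (simp add: algebra_simps)
      qed
    qed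
    show "\<forall>\<^sub>F u in at_top. a < f u * (1 - F u)"
      using ev1 ev2 fpos
    proof eventually_elim
      case (elim u)
      have "f u * aN (t * u) * \<beta> e \<le> f u * aN (u - ln e) * \<beta> e"
        using aN_mono[OF elim(2)] elim(3) beta01 by (intro mult_right_mono mult_left_mono) auto
      also have "\<dots> = f u * (aN (u - ln e) * \<beta> e)" by simp
      also have "\<dots> \<le> f u * (1 - F u)" using U2[OF e0, of u] elim(3) by (rule mult_left_mono)
      finally show ?case using elim(1) by simp
    qed
  next
    fix a assume a: "c_plus < a"
    have "\<forall>\<^sub>F u in at_top. f u * aN u < a" using tp a by (rule order_tendstoD(2))
    then show "\<forall>\<^sub>F u in at_top. f u * (1 - F u) < a"
      using fpos
    proof eventually_elim
      case (elim u)
      have "f u * (1 - F u) \<le> f u * aN u" using U1[of u] elim(2) by (rule mult_left_mono)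
      then show ?case using elim(1) by simp
    qed
  qed
  have lim2: "((\<lambda>u. f u * F (- u)) \<longlongrightarrow> c_minus) at_top"
  proof (rule order_tendstoI)
    fix a assume a: "a < c_minus"
    have "\<forall>\<^sub>F u in at_top. a < f u * bN u" using tm a by (rule order_tendstoD(1))
    then show "\<forall>\<^sub>F u in at_top. a < f u * F (- u)"
      using fpos
    proof eventually_elim
      case (elim u)
      have "f u * bN u \<le> f u * F (- u)" using L1[of u] elim(2) by (rule mult_left_mono)
      then show ?case using elim(1) by simp
    qed
  next
    fix a assume a: "c_minus < a"
    define tn where "tn n = 1 - inverse (real (Suc (Suc n)))" for n
    have "(\<lambda>n. tn n powr (- \<alpha>) * c_minus + K' * (1 - \<beta> (en n))) \<longlonglongrightarrow> 1 powr (- \<alpha>) * c_minus + K' * (1 - 1)"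
    proof -
      have "(\<lambda>n. inverse (real (Suc (Suc n)))) \<longlonglongrightarrow> 0"
        using LIMSEQ_inverse_real_of_nat by (rule LIMSEQ_Suc)
      then have "tn \<longlonglongrightarrow> 1 - 0" unfolding tn_def by (intro tendsto_diff tendsto_const)
      then show ?thesis by (intro tendsto_add tendsto_mult tendsto_const tendsto_powr betalim tendsto_diff) auto
    qed
    then have "\<forall>\<^sub>F n in sequentially. tn n powr (- \<alpha>) * c_minus + K' * (1 - \<beta> (en n)) < a"
      using a by (intro order_tendstoD(2)) auto
    then obtain n where n: "tn n powr (- \<alpha>) * c_minus + K' * (1 - \<beta> (en n)) < a" by (auto simp: eventually_sequentially)
    define t where "t = tn n"
    define e where "e = en n"
    have t0: "t > 0" "t < 1" unfolding t_def tn_def by (auto simp: field_simps)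
    have e0: "e > 0" unfolding e_def by (rule en_pos)
    have "((\<lambda>u. f u * bN (t * u) + K' * (1 - \<beta> e)) \<longlongrightarrow> t powr (- \<alpha>) * c_minus + K' * (1 - \<beta> e)) at_top"
    proof -
      have "((\<lambda>u. f u * bN (t * u)) \<longlongrightarrow> t powr (- \<alpha>) * c_minus) at_top"
        using reg_shift[OF L_sv t0(1) tm[unfolded f_def]] unfolding f_def by simp
      then show ?thesis by (rule tendsto_add[OF _ tendsto_const])
    qed
    then have ev1: "\<forall>\<^sub>F u in at_top. f u * bN (t * u) + K' * (1 - \<beta> e) < a"
      using n unfolding t_def e_def by (intro order_tendstoD(2)) auto
    have ev2: "\<forall>\<^sub>F u in at_top. t * u \<le> u + ln e"
    proof -
      have "\<forall>\<^sub>F u in at_top. u \<ge> - ln e / (1 - t)" by (rule eventually_ge_at_top)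
      then show ?thesis
      proof eventually_elim
        case (elim u)
        have "(- ln e / (1 - t)) * (1 - t) \<le> u * (1 - t)" using elim t0 by (intro mult_right_mono) auto
        moreover have "(- ln e / (1 - t)) * (1 - t) = - ln e" using t0 by simp
        ultimately have "- ln e \<le> (1 - t) * u" by (simp add: mult.commute)
        then show ?case by (simp add: algebra_simps)
      qed
    qed
    show "\<forall>\<^sub>F u in at_top. f u * F (- u) < a"
      using ev1 ev2 fpos K
    proof eventually_elim
      case (elim u)
      have b: "0 \<le> 1 - \<beta> e" using beta01 by simp
      have "f u * F (- u) \<le> f u * (bN (u + ln e) + vV u * (1 - \<beta> e))"
        using L2[OF e0, of u] elim(3) by (rule mult_left_mono)
      also have "\<dots> = f u * bN (u + ln e) + (f u * vV u) * (1 - \<beta> e)" by (simp add: algebra_simps)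
      also have "\<dots> \<le> f u * bN (t * u) + K' * (1 - \<beta> e)"
      proof (rule add_mono)
        show "f u * bN (u + ln e) \<le> f u * bN (t * u)" using bN_mono[OF elim(2)] elim(3) by (rule mult_left_mono)
        have "f u * vV u \<le> K'" using elim(4) unfolding K'_def by simp
        then show "f u * vV u * (1 - \<beta> e) \<le> K' * (1 - \<beta> e)" using b by (rule mult_right_mono)
      qed
      finally show ?case using elim(1) by simp
    qed
  qed
  show ?thesis
    unfolding Let_def \<mu>_def[symmetric] using lim1 lim2 by (simp add: F_def T_def f_def)
qed


end
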